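(* Let $v$ be an arbitrary bounded potential, $N\ge2$, and $\zeta_l,\zeta_r>0$. Then $$\lim_{\beta\to\infty}\beta\,\mathcal{J}_\beta(N)=\frac{2(\alpha_{in}^l\alpha_{out}^r-\alpha_{out}^l\alpha_{in}^r)}{\zeta_l\zeta_r(N-1)}.$$
   Context: Let $v:\mathbb{N}\to\mathbb{R}$ be bounded, $e_1,\dots,e_N$ the standard basis of $\mathbb{C}^N$, $p_n=|e_n\rangle\langle e_n|$, $h$ the Hermitian matrix $(h\psi)(n)=-\psi(n+1)-\psi(n-1)+v(n)\psi(n)$, $n=1,\dots,N$, $\psi(0)=\psi(N+1)=0$. Let $\alpha_{in}^l,\alpha_{out}^l,\alpha_{in}^r,\alpha_{out}^r\ge0$, $\zeta_l=\alpha_{in}^l+\alpha_{out}^l$, $\zeta_r=\alpha_{in}^r+\alpha_{out}^r$. For $\beta\ge0$ define $l_\beta(a)=-i[h,a]-\{\zeta_lp_1+\zeta_rp_N,a\}+\beta\left(\sum_{n=1}^Np_nap_n-a\right)$ on $M_N(\mathbb{C})$, $R_\infty^{(\beta)}=\int_0^\infty e^{sl_\beta}(2\alpha_{in}^lp_1+2\alpha_{in}^rp_N)\,ds$, and $\mathcal{J}_\beta(N)=2\,\mathrm{Im}\langle e_2,R^{(\beta)}_\infty e_1\rangle$. *)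

theory Defs
  imports "HOL-Analysis.Analysis"
begin

text \<open>N x N complex matrices are represented as functions nat \<Rightarrow> nat \<Rightarrow> complex,
  with the relevant entries indexed by {1..N} (the standard basis e_1,...,e_N).\<close>

type_synonym cmat = "nat \<Rightarrow> nat \<Rightarrow> complex"

definition mmul :: "nat \<Rightarrow> cmat \<Rightarrow> cmat \<Rightarrow> cmat" where
  "mmul N A B = (\<lambda>i j. \<Sum>k=1..N. A i k * B k j)"

definition mrestr :: "nat \<Rightarrow> cmat \<Rightarrow> cmat" where
  "mrestr N A = (\<lambda>i j. if i \<in> {1..N} \<and> j \<in> {1..N} then A i j else 0)"

definition proj :: "nat \<Rightarrow> cmat" where
  "proj n = (\<lambda>i j. if i = n \<and> j = n then 1 else 0)"

definition hamil :: "(nat \<Rightarrow> real) \<Rightarrow> nat \<Rightarrow> cmat" where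
  "hamil v N = (\<lambda>i j. if i \<in> {1..N} \<and> j \<in> {1..N} then
       (if i = j then complex_of_real (v i) else if i = j + 1 \<or> j = i + 1 then -1 else 0)
     else 0)"

definition lgen :: "(nat \<Rightarrow> real) \<Rightarrow> nat \<Rightarrow> real \<Rightarrow> real \<Rightarrow> real \<Rightarrow> cmat \<Rightarrow> cmat" where
  "lgen v N zl zr \<beta> a = mrestr N (\<lambda>i j.
      - \<i> * (mmul N (hamil v N) a i j - mmul N a (hamil v N) i j)
      - (mmul N (\<lambda>x y. of_real zl * proj 1 x y + of_real zr * proj N x y) a i j
         + mmul N a (\<lambda>x y. of_real zl * proj 1 x y + of_real zr * proj N x y) i j)
      + of_real \<beta> * ((\<Sum>n=1..N. mmul N (mmul N (proj n) a) (proj n) i j) - a i j))"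

definition semigrp :: "(cmat \<Rightarrow> cmat) \<Rightarrow> real \<Rightarrow> cmat \<Rightarrow> cmat" where
  "semigrp L s a = (\<lambda>i j. \<Sum>k. complex_of_real (s ^ k / fact k) * (L ^^ k) a i j)"

definition Rinf :: "(nat \<Rightarrow> real) \<Rightarrow> nat \<Rightarrow> real \<Rightarrow> real \<Rightarrow> real \<Rightarrow> real \<Rightarrow> real \<Rightarrow> cmat" where
  "Rinf v N ail aol air aor \<beta> = (\<lambda>i j. integral {0..} (\<lambda>s. (
      semigrp (lgen v N (ail + aol) (air + aor) \<beta>) s
        (\<lambda>x y. of_real (2 * ail) * proj 1 x y + of_real (2 * air) * proj N x y)) i j))"

definition Jcur :: "(nat \<Rightarrow> real) \<Rightarrow> nat \<Rightarrow> real \<Rightarrow> real \<Rightarrow> real \<Rightarrow> real \<Rightarrow> real \<Rightarrow> real" where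
  "Jcur v N ail aol air aor \<beta> = 2 * Im (Rinf v N ail aol air aor \<beta> 2 1)"

end

theory Submission
  imports Defs
begin


definition zf :: "nat \<Rightarrow> real \<Rightarrow> real \<Rightarrow> nat \<Rightarrow> real" where
  "zf N zl zr i = (if i = 1 then zl else 0) + (if i = N then zr else 0)"

definition Hc :: "(nat \<Rightarrow> real) \<Rightarrow> nat \<Rightarrow> cmat \<Rightarrow> nat \<Rightarrow> nat \<Rightarrow> complex" where
  "Hc v N b i j = ((if i < N then - b (i+1) j else 0) + (if 1 < i then - b (i-1) j else 0) + of_real (v i) * b i j
        - ((if j < N then - b i (j+1) else 0) + (if 1 < j then - b i (j-1) else 0) + b i j * of_real (v j)))"

definition Lloc :: "(nat \<Rightarrow> real) \<Rightarrow> nat \<Rightarrow> real \<Rightarrow> real \<Rightarrow> real \<Rightarrow> cmat \<Rightarrow> cmat" where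
  "Lloc v N zl zr \<beta> b = (\<lambda>i j. if i \<in> {1..N} \<and> j \<in> {1..N} then
     - \<i> * Hc v N b i j
     - of_real (zf N zl zr i + zf N zl zr j) * b i j
     - (if i = j then 0 else of_real \<beta> * b i j)
   else 0)"

lemma hamil_loc:
  assumes "i \<in> {1..N}" "k \<in> {1..N}"
  shows "hamil v N i k = (if k = i then of_real (v i) else 0) + (if k = i+1 then -1 else 0) + (if k+1 = i then -1 else 0)"
  using assms unfolding hamil_def by auto

lemma sum_delta_nat:
  fixes f :: "nat \<Rightarrow> complex"
  shows "(\<Sum>k\<in>{1..N}. (if k = a then f k else 0)) = (if a \<in> {1..N} then f a else 0)"
  by (simp add: sum.delta')

lemma mmul_h_left:
  assumes "i \<in> {1..N}"
  shows "mmul N (hamil v N) b i j = (if i < N then - b (i+1) j else 0) + (if 1 < i then - b (i-1) j else 0) + of_real (v i) * b i j"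
proof -
  have "mmul N (hamil v N) b i j = (\<Sum>k\<in>{1..N}. (if k = i then of_real (v i) * b k j else 0) + (if k = i+1 then - b k j else 0) + (if k = i - 1 \<and> 1 < i then - b k j else 0))"
    unfolding mmul_def using assms
    by (intro sum.cong refl) (auto simp: hamil_loc)
  also have "\<dots> = (if i < N then - b (i+1) j else 0) + (if 1 < i then - b (i-1) j else 0) + of_real (v i) * b i j"
    using assms by (auto simp add: sum.distrib sum.delta')
  finally show ?thesis .
qed

lemma mmul_h_right:
  assumes "j \<in> {1..N}"
  shows "mmul N b (hamil v N) i j = (if j < N then - b i (j+1) else 0) + (if 1 < j then - b i (j-1) else 0) + b i j * of_real (v j)"
proof -
  have "mmul N b (hamil v N) i j = (\<Sum>k\<in>{1..N}. (if k = j then b i k * of_real (v j) else 0) + (if k = j+1 then - b i k else 0) + (if k = j - 1 \<and> 1 < j then - b i k else 0))"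
    unfolding mmul_def using assms
    by (intro sum.cong refl) (auto simp: hamil_loc hamil_def)
  also have "\<dots> = (if j < N then - b i (j+1) else 0) + (if 1 < j then - b i (j-1) else 0) + b i j * of_real (v j)"
    using assms by (auto simp add: sum.distrib sum.delta')
  finally show ?thesis .
qed

lemma mmul_z_left:
  assumes "i \<in> {1..N}"
  shows "mmul N (\<lambda>x y. of_real zl * proj 1 x y + of_real zr * proj N x y) b i j = of_real (zf N zl zr i) * b i j"
proof -
  have "mmul N (\<lambda>x y. of_real zl * proj 1 x y + of_real zr * proj N x y) b i j
     = (\<Sum>k\<in>{1..N}. if k = i then of_real (zf N zl zr i) * b k j else 0)"
    unfolding mmul_def proj_def zf_def by (intro sum.cong refl) (auto simp: distrib_right)
  also have "\<dots> = of_real (zf N zl zr i) * b i j"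
    using assms by (simp add: sum.delta')
  finally show ?thesis .
qed

lemma mmul_z_right:
  assumes "j \<in> {1..N}"
  shows "mmul N b (\<lambda>x y. of_real zl * proj 1 x y + of_real zr * proj N x y) i j = of_real (zf N zl zr j) * b i j"
proof -
  have "mmul N b (\<lambda>x y. of_real zl * proj 1 x y + of_real zr * proj N x y) i j
     = (\<Sum>k\<in>{1..N}. if k = j then of_real (zf N zl zr j) * b i k else 0)"
    unfolding mmul_def proj_def zf_def by (intro sum.cong refl) (auto simp: distrib_right distrib_left mult.commute)
  also have "\<dots> = of_real (zf N zl zr j) * b i j"
    using assms by (simp add: sum.delta')
  finally show ?thesis .
qed

lemma mmul_proj_left:
  assumes "n \<in> {1..N}"
  shows "mmul N (proj n) b i k = (if i = n then b n k else 0)"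
proof -
  have "mmul N (proj n) b i k = (\<Sum>m\<in>{1..N}. if m = n then (if i = n then b m k else 0) else 0)"
    unfolding mmul_def proj_def by (intro sum.cong refl) auto
  then show ?thesis using assms by (simp add: sum.delta')
qed

lemma mmul_proj_right:
  assumes "n \<in> {1..N}"
  shows "mmul N b (proj n) i j = (if j = n then b i n else 0)"
proof -
  have "mmul N b (proj n) i j = (\<Sum>m\<in>{1..N}. if m = n then (if j = n then b i m else 0) else 0)"
    unfolding mmul_def proj_def by (intro sum.cong refl) auto
  then show ?thesis using assms by (simp add: sum.delta')
qed

lemma deph:
  assumes "i \<in> {1..N}" "j \<in> {1..N}"
  shows "(\<Sum>n=1..N. mmul N (mmul N (proj n) b) (proj n) i j) = (if i = j then b i j else 0)"
proof -
  have "(\<Sum>n=1..N. mmul N (mmul N (proj n) b) (proj n) i j) = (\<Sum>n=1..N. if n = i then (if i = j then b i j else 0) else 0)"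
    by (intro sum.cong refl) (auto simp: mmul_proj_left mmul_proj_right)
  also have "\<dots> = (if i = j then b i j else 0)" using assms by (simp add: sum.delta')
  finally show ?thesis .
qed

lemma lgen_eq: "lgen v N zl zr \<beta> b i j = Lloc v N zl zr \<beta> b i j"
proof (cases "i \<in> {1..N} \<and> j \<in> {1..N}")
  case True
  then have i: "i \<in> {1..N}" and j: "j \<in> {1..N}" by auto
  have H: "mmul N (hamil v N) b i j - mmul N b (hamil v N) i j = Hc v N b i j"
    unfolding Hc_def mmul_h_left[OF i] mmul_h_right[OF j] ..
  show ?thesis
    using True
    apply (simp only: lgen_def Lloc_def mrestr_def if_True H
       mmul_z_left[OF i] mmul_z_right[OF j] deph[OF i j])
    apply (cases "i = j")
     apply (simp_all add: ring_distribs)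
    done
next
  case False
  then show ?thesis unfolding lgen_def Lloc_def mrestr_def by auto
qed

lemma lgen_eq': "lgen v N zl zr \<beta> = Lloc v N zl zr \<beta>"
  by (intro ext lgen_eq)


definition Em :: "nat \<Rightarrow> nat \<Rightarrow> cmat" where
  "Em p q = (\<lambda>i j. if i = p \<and> j = q then 1 else 0)"

locale sys =
  fixes v :: "nat \<Rightarrow> real" and N :: nat and zl zr \<beta> :: real
  assumes N2: "2 \<le> N" and zl: "0 < zl" and zr: "0 < zr" and bpos: "0 < \<beta>"
begin

abbreviation "L \<equiv> Lloc v N zl zr \<beta>"

definition supp :: "cmat \<Rightarrow> bool" where
  "supp b \<longleftrightarrow> (\<forall>i j. \<not> (i \<in> {1..N} \<and> j \<in> {1..N}) \<longrightarrow> b i j = 0)"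

lemma supp_L: "supp (L b)" unfolding supp_def Lloc_def by auto

definition ind :: "bool \<Rightarrow> complex" where "ind c = (if c then 1 else 0)"

lemma Hc_alt: "Hc v N b i j = - (ind (i < N) * b (i+1) j) - (ind (1 < i) * b (i-1) j) + of_real (v i) * b i j
      + (ind (j < N) * b i (j+1)) + (ind (1 < j) * b i (j-1)) - b i j * of_real (v j)"
  unfolding Hc_def ind_def by simp

lemma Hc_add: "Hc v N (\<lambda>i j. a i j + b i j) i j = Hc v N a i j + Hc v N b i j"
  unfolding Hc_alt by (simp add: algebra_simps)

lemma Hc_scale: "Hc v N (\<lambda>i j. c * b i j) i j = c * Hc v N b i j"
  unfolding Hc_alt by (simp add: algebra_simps)

lemma Hc_zero: "Hc v N (\<lambda>i j. 0) i j = 0"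
  unfolding Hc_def by simp

lemma L_in: "i \<in> {1..N} \<Longrightarrow> j \<in> {1..N} \<Longrightarrow> L b i j = - \<i> * Hc v N b i j
     - of_real (zf N zl zr i + zf N zl zr j) * b i j - (if i = j then 0 else of_real \<beta> * b i j)"
  unfolding Lloc_def by simp

lemma L_out: assumes "\<not> (i \<in> {1..N} \<and> j \<in> {1..N})" shows "L b i j = 0"
  unfolding Lloc_def by (simp only: if_not_P[OF assms])

lemma L_add: "L (\<lambda>i j. a i j + b i j) = (\<lambda>i j. L a i j + L b i j)"
proof (intro ext)
  fix i j
  show "L (\<lambda>i j. a i j + b i j) i j = L a i j + L b i j"
  proof (cases "i \<in> {1..N} \<and> j \<in> {1..N}")
    case True
    then show ?thesis unfolding L_in[OF conjunct1[OF True] conjunct2[OF True]] Hc_add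
      by (cases "i = j") (simp_all add: algebra_simps)
  qed (simp add: L_out)
qed

lemma L_scale: "L (\<lambda>i j. c * b i j) = (\<lambda>i j. c * L b i j)"
proof (intro ext)
  fix i j
  show "L (\<lambda>i j. c * b i j) i j = c * L b i j"
  proof (cases "i \<in> {1..N} \<and> j \<in> {1..N}")
    case True
    then show ?thesis unfolding L_in[OF conjunct1[OF True] conjunct2[OF True]] Hc_scale
      by (cases "i = j") (simp_all add: algebra_simps)
  qed (simp add: L_out)
qed

lemma L_zero: "L (\<lambda>i j. 0) = (\<lambda>i j. 0)"
  unfolding Lloc_def Hc_zero by (intro ext) simp

lemma L_sum: "finite A \<Longrightarrow> L (\<lambda>i j. \<Sum>x\<in>A. f x i j) = (\<lambda>i j. \<Sum>x\<in>A. L (f x) i j)"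
proof (induction A rule: finite_induct)
  case empty
  then show ?case using L_zero by simp
next
  case (insert x F)
  then show ?case by (simp add: L_add)
qed

lemma supp_decomp:
  assumes "supp b"
  shows "b = (\<lambda>i j. \<Sum>p\<in>{1..N}. \<Sum>q\<in>{1..N}. b p q * Em p q i j)"
proof (intro ext)
  fix i j
  have "(\<Sum>p\<in>{1..N}. \<Sum>q\<in>{1..N}. b p q * Em p q i j) = (\<Sum>p\<in>{1..N}. if p = i then (\<Sum>q\<in>{1..N}. if q = j then b p q else 0) else 0)"
  proof (intro sum.cong refl)
    fix p assume "p \<in> {1..N}"
    have e: "b p q * Em p q i j = (if p = i then (if q = j then b p q else 0) else 0)" for q
      unfolding Em_def by auto
    show "(\<Sum>q\<in>{1..N}. b p q * Em p q i j) = (if p = i then (\<Sum>q\<in>{1..N}. if q = j then b p q else 0) else 0)"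
      unfolding e by auto
  qed
  also have "\<dots> = (if i \<in> {1..N} \<and> j \<in> {1..N} then b i j else 0)"
    by (simp add: sum.delta')
  also have "\<dots> = b i j" using assms unfolding supp_def by auto
  finally show "b i j = (\<Sum>p\<in>{1..N}. \<Sum>q\<in>{1..N}. b p q * Em p q i j)" by simp
qed

definition K :: "nat \<Rightarrow> nat \<Rightarrow> nat \<Rightarrow> nat \<Rightarrow> complex" where
  "K i j p q = L (Em p q) i j"

lemma Lrep:
  assumes "supp b"
  shows "L b i j = (\<Sum>p\<in>{1..N}. \<Sum>q\<in>{1..N}. K i j p q * b p q)"
proof -
  have "L b i j = L (\<lambda>i j. \<Sum>p\<in>{1..N}. \<Sum>q\<in>{1..N}. b p q * Em p q i j) i j"
    using supp_decomp[OF assms] by metis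
  also have "\<dots> = (\<Sum>p\<in>{1..N}. \<Sum>q\<in>{1..N}. L (\<lambda>i j. b p q * Em p q i j) i j)"
    by (simp add: L_sum)
  also have "\<dots> = (\<Sum>p\<in>{1..N}. \<Sum>q\<in>{1..N}. K i j p q * b p q)"
    unfolding K_def by (simp add: L_scale mult.commute)
  finally show ?thesis .
qed


definition nrm1 :: "cmat \<Rightarrow> real" where
  "nrm1 b = (\<Sum>i\<in>{1..N}. \<Sum>j\<in>{1..N}. cmod (b i j))"

lemma nrm1_nonneg: "0 \<le> nrm1 b" unfolding nrm1_def by (intro sum_nonneg) auto

lemma entry_le_nrm1:
  assumes "i \<in> {1..N}" "j \<in> {1..N}"
  shows "cmod (b i j) \<le> nrm1 b"
proof -
  have "cmod (b i j) \<le> (\<Sum>j\<in>{1..N}. cmod (b i j))"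
    using assms by (intro member_le_sum) auto
  also have "\<dots> \<le> nrm1 b" unfolding nrm1_def
    using assms by (intro member_le_sum sum_nonneg) auto
  finally show ?thesis .
qed

definition KMij :: "nat \<Rightarrow> nat \<Rightarrow> real" where
  "KMij i j = (\<Sum>p\<in>{1..N}. \<Sum>q\<in>{1..N}. cmod (K i j p q))"

definition KM :: real where "KM = (\<Sum>i\<in>{1..N}. \<Sum>j\<in>{1..N}. KMij i j)"

lemma KMij_nonneg: "0 \<le> KMij i j" unfolding KMij_def by (intro sum_nonneg) auto

lemma KMij_le: "i \<in> {1..N} \<Longrightarrow> j \<in> {1..N} \<Longrightarrow> KMij i j \<le> KM"
proof -
  assume a: "i \<in> {1..N}" "j \<in> {1..N}"
  have "KMij i j \<le> (\<Sum>j\<in>{1..N}. KMij i j)"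
    using a by (intro member_le_sum KMij_nonneg) auto
  also have "\<dots> \<le> KM" unfolding KM_def
    using a by (intro member_le_sum sum_nonneg KMij_nonneg) auto
  finally show ?thesis .
qed

lemma KM_nonneg: "0 \<le> KM" unfolding KM_def by (intro sum_nonneg KMij_nonneg)

lemma L_entry_bound:
  assumes "supp b"
  shows "cmod (L b i j) \<le> KMij i j * nrm1 b"
proof -
  have "cmod (L b i j) \<le> (\<Sum>p\<in>{1..N}. \<Sum>q\<in>{1..N}. cmod (K i j p q) * cmod (b p q))"
    unfolding Lrep[OF assms]
    by (rule order_trans[OF norm_sum sum_mono], rule order_trans[OF norm_sum sum_mono]) (simp add: norm_mult)
  also have "\<dots> \<le> (\<Sum>p\<in>{1..N}. \<Sum>q\<in>{1..N}. cmod (K i j p q) * nrm1 b)"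
    by (intro sum_mono mult_left_mono entry_le_nrm1) auto
  also have "\<dots> = KMij i j * nrm1 b"
    unfolding KMij_def by (simp add: sum_distrib_right)
  finally show ?thesis .
qed

lemma nrm1_L: assumes "supp b" shows "nrm1 (L b) \<le> KM * nrm1 b"
proof -
  have "nrm1 (L b) \<le> (\<Sum>i\<in>{1..N}. \<Sum>j\<in>{1..N}. KMij i j * nrm1 b)"
    unfolding nrm1_def[of "L b"] by (intro sum_mono L_entry_bound[OF assms])
  also have "\<dots> = KM * nrm1 b" unfolding KM_def by (simp add: sum_distrib_right)
  finally show ?thesis .
qed

definition C :: real where "C = KM + 1"

lemma C_ge1: "1 \<le> C" unfolding C_def using KM_nonneg by simp

lemma Lpow_supp: "supp a \<Longrightarrow> supp ((L ^^ k) a)"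
  by (induction k) (auto simp: supp_L)

lemma nrm1_pow: "supp a \<Longrightarrow> nrm1 ((L ^^ k) a) \<le> C ^ k * nrm1 a"
proof (induction k)
  case 0 then show ?case by simp
next
  case (Suc k)
  have "nrm1 ((L ^^ Suc k) a) \<le> KM * nrm1 ((L ^^ k) a)"
    using nrm1_L[OF Lpow_supp[OF Suc.prems]] by simp
  also have "\<dots> \<le> C * (C ^ k * nrm1 a)"
    using Suc KM_nonneg nrm1_nonneg unfolding C_def
    by (intro mult_mono) auto
  finally show ?case by simp
qed

lemma entry_pow: "supp a \<Longrightarrow> cmod ((L ^^ k) a i j) \<le> C ^ k * nrm1 a"
proof (cases "i \<in> {1..N} \<and> j \<in> {1..N}")
  case True
  assume a: "supp a"
  have "cmod ((L ^^ k) a i j) \<le> nrm1 ((L ^^ k) a)" using True by (intro entry_le_nrm1) auto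
  also have "\<dots> \<le> C ^ k * nrm1 a" by (rule nrm1_pow[OF a])
  finally show ?thesis .
next
  case False
  assume a: "supp a"
  then have "(L ^^ k) a i j = 0" using Lpow_supp[OF a] False unfolding supp_def by auto
  then show ?thesis using C_ge1 nrm1_nonneg by simp
qed

definition cser :: "cmat \<Rightarrow> nat \<Rightarrow> nat \<Rightarrow> nat \<Rightarrow> complex" where
  "cser a i j k = (L ^^ k) a i j / fact k"

lemma sg_eq: "semigrp L s a i j = (\<Sum>k. cser a i j k * (of_real s) ^ k)"
  unfolding semigrp_def cser_def
  by (intro suminf_cong) (simp add: field_simps)

lemma summable_cser:
  assumes "supp a"
  shows "summable (\<lambda>k. cser a i j k * z ^ k)"
proof (rule summable_comparison_test')
  show "summable (\<lambda>k. nrm1 a * (inverse (fact k) * (C * norm z) ^ k))"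
    by (intro summable_mult summable_exp)
  fix k :: nat
  have "norm (cser a i j k * z ^ k) = cmod ((L ^^ k) a i j) * inverse (fact k) * norm z ^ k"
    unfolding cser_def by (simp add: norm_mult norm_divide norm_power divide_inverse norm_inverse)
  also have "\<dots> \<le> (C ^ k * nrm1 a) * inverse (fact k) * norm z ^ k"
    by (intro mult_right_mono entry_pow[OF assms]) auto
  also have "\<dots> = nrm1 a * (inverse (fact k) * (C * norm z) ^ k)"
    by (simp add: power_mult_distrib)
  finally show "norm (cser a i j k * z ^ k) \<le> nrm1 a * (inverse (fact k) * (C * norm z) ^ k)" .
qed

lemma diffs_cser: "diffs (cser a i j) = cser (L a) i j"
proof
  fix n
  have e: "(L ^^ Suc n) a = (L ^^ n) (L a)" by (simp add: funpow_swap1)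
  have f: "fact (Suc n) = (of_nat (Suc n) :: complex) * fact n" by (rule fact_Suc)
  have nz: "(of_nat (Suc n) :: complex) \<noteq> 0" "(fact n :: complex) \<noteq> 0" by (simp_all del: of_nat_Suc)
  have "of_nat (Suc n) * ((L ^^ Suc n) a i j / fact (Suc n)) = (L ^^ n) (L a) i j / (fact n :: complex)"
    unfolding e f using nz by (simp add: field_simps del: of_nat_Suc)
  then show "diffs (cser a i j) n = cser (L a) i j n"
    unfolding diffs_def cser_def .
qed

lemma sg_deriv:
  assumes "supp a"
  shows "((\<lambda>s. semigrp L s a i j) has_vector_derivative semigrp L s (L a) i j) (at s within S)"
proof -
  have "((\<lambda>z. \<Sum>k. cser a i j k * z ^ k) has_field_derivative (\<Sum>k. diffs (cser a i j) k * (of_real s) ^ k)) (at (of_real s))"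
    by (rule termdiffs_strong_converges_everywhere) (rule summable_cser[OF assms])
  then have "((\<lambda>x. \<Sum>k. cser a i j k * (of_real x) ^ k) has_vector_derivative (\<Sum>k. diffs (cser a i j) k * (of_real s) ^ k)) (at s within S)"
    by (rule has_vector_derivative_real_field)
  then show ?thesis unfolding sg_eq diffs_cser .
qed

lemma sg_supp: "supp a \<Longrightarrow> supp (semigrp L s a)"
proof -
  assume a: "supp a"
  show ?thesis unfolding supp_def semigrp_def
    using Lpow_supp[OF a] unfolding supp_def by auto
qed

lemma sg_L:
  assumes "supp a"
  shows "semigrp L s (L a) i j = L (semigrp L s a) i j"
proof -
  have sm: "summable (\<lambda>k. cser a p q k * (of_real s) ^ k)" for p q by (rule summable_cser[OF assms])
  have "L (semigrp L s a) i j = (\<Sum>p\<in>{1..N}. \<Sum>q\<in>{1..N}. K i j p q * (\<Sum>k. cser a p q k * (of_real s) ^ k))"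
    unfolding Lrep[OF sg_supp[OF assms]] sg_eq ..
  also have "\<dots> = (\<Sum>p\<in>{1..N}. \<Sum>q\<in>{1..N}. \<Sum>k. K i j p q * (cser a p q k * (of_real s) ^ k))"
    by (simp add: suminf_mult sm)
  also have "\<dots> = (\<Sum>p\<in>{1..N}. \<Sum>k. \<Sum>q\<in>{1..N}. K i j p q * (cser a p q k * (of_real s) ^ k))"
    by (intro sum.cong refl suminf_sum[symmetric] summable_mult sm)
  also have "\<dots> = (\<Sum>k. \<Sum>p\<in>{1..N}. \<Sum>q\<in>{1..N}. K i j p q * (cser a p q k * (of_real s) ^ k))"
    by (intro suminf_sum[symmetric] summable_sum summable_mult sm)
  also have "\<dots> = (\<Sum>k. cser (L a) i j k * (of_real s) ^ k)"
  proof (intro suminf_cong)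
    fix k
    have "(L ^^ k) (L a) = L ((L ^^ k) a)" by (simp add: funpow_swap1)
    then have "cser (L a) i j k * (of_real s) ^ k = (\<Sum>p\<in>{1..N}. \<Sum>q\<in>{1..N}. K i j p q * (L ^^ k) a p q) / fact k * (of_real s) ^ k"
      unfolding cser_def using Lrep[OF Lpow_supp[OF assms]] by simp
    also have "\<dots> = (\<Sum>p\<in>{1..N}. \<Sum>q\<in>{1..N}. K i j p q * (L ^^ k) a p q / fact k * (of_real s) ^ k)"
      by (simp add: sum_divide_distrib sum_distrib_right)
    also have "\<dots> = (\<Sum>p\<in>{1..N}. \<Sum>q\<in>{1..N}. K i j p q * (cser a p q k * (of_real s) ^ k))"
      unfolding cser_def by (intro sum.cong refl) simp
    finally show "(\<Sum>p\<in>{1..N}. \<Sum>q\<in>{1..N}. K i j p q * (cser a p q k * (of_real s) ^ k)) = cser (L a) i j k * (of_real s) ^ k"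
      by simp
  qed
  finally show ?thesis unfolding sg_eq by simp
qed


end


lemma hamil_sym: "hamil v N i k = hamil v N k i"
  unfolding hamil_def by auto

lemma hamil_cnj: "cnj (hamil v N i k) = hamil v N i k"
  unfolding hamil_def by auto

context sys begin

definition nrm2 :: "cmat \<Rightarrow> real" where
  "nrm2 b = (\<Sum>i\<in>{1..N}. \<Sum>j\<in>{1..N}. (cmod (b i j))^2)"

definition ip :: "cmat \<Rightarrow> cmat \<Rightarrow> complex" where
  "ip a b = (\<Sum>i\<in>{1..N}. \<Sum>j\<in>{1..N}. cnj (a i j) * b i j)"

definition Dq :: "cmat \<Rightarrow> real" where
  "Dq b = (\<Sum>i\<in>{1..N}. \<Sum>j\<in>{1..N}. (zf N zl zr i + zf N zl zr j + (if i = j then 0 else \<beta>)) * (cmod (b i j))^2)"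

lemma zf_nonneg: "0 \<le> zf N zl zr i" unfolding zf_def using zl zr by auto

lemma zf_le: "zf N zl zr i \<le> zl + zr" unfolding zf_def using zl zr by auto

lemma zf_1: "zf N zl zr 1 = zl" unfolding zf_def using N2 by auto

lemma zf_N: "zf N zl zr N = zr" unfolding zf_def using N2 by auto

lemma zf_mid: "1 < n \<Longrightarrow> n < N \<Longrightarrow> zf N zl zr n = 0" unfolding zf_def by auto

lemma coef_nonneg: "0 \<le> zf N zl zr i + zf N zl zr j + (if i = j then 0 else \<beta>)"
  using zf_nonneg[of i] zf_nonneg[of j] bpos by auto

lemma Dq_nonneg: "0 \<le> Dq b"
  unfolding Dq_def by (intro sum_nonneg mult_nonneg_nonneg coef_nonneg) auto

lemma Dq_term:
  assumes "i \<in> {1..N}" "j \<in> {1..N}"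
  shows "(zf N zl zr i + zf N zl zr j + (if i = j then 0 else \<beta>)) * (cmod (b i j))^2 \<le> Dq b"
proof -
  have "(zf N zl zr i + zf N zl zr j + (if i = j then 0 else \<beta>)) * (cmod (b i j))^2
     \<le> (\<Sum>j\<in>{1..N}. (zf N zl zr i + zf N zl zr j + (if i = j then 0 else \<beta>)) * (cmod (b i j))^2)"
    using assms by (intro member_le_sum mult_nonneg_nonneg coef_nonneg) auto
  also have "\<dots> \<le> Dq b" unfolding Dq_def
    using assms by (intro member_le_sum sum_nonneg mult_nonneg_nonneg coef_nonneg) auto
  finally show ?thesis .
qed

lemma Dq_off:
  assumes "i \<in> {1..N}" "j \<in> {1..N}" "i \<noteq> j"
  shows "\<beta> * (cmod (b i j))^2 \<le> Dq b"
proof -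
  have "\<beta> * (cmod (b i j))^2 \<le> (zf N zl zr i + zf N zl zr j + (if i = j then 0 else \<beta>)) * (cmod (b i j))^2"
    using assms zf_nonneg[of i] zf_nonneg[of j] by (intro mult_right_mono) auto
  also have "\<dots> \<le> Dq b" by (rule Dq_term[OF assms(1,2)])
  finally show ?thesis .
qed

lemma Dq_off':
  assumes "i \<in> {1..N}" "j \<in> {1..N}" "i \<noteq> j" "Dq b \<le> Q"
  shows "cmod (b i j) \<le> sqrt (Q / \<beta>)"
proof -
  have "(cmod (b i j))^2 \<le> Q / \<beta>"
    using Dq_off[OF assms(1-3), of b] assms(4) bpos by (simp add: field_simps)
  then show ?thesis by (simp add: real_le_rsqrt)
qed

lemma Dq_11: "2 * zl * (cmod (b 1 1))^2 \<le> Dq b"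
  using Dq_term[of 1 1 b] N2 zf_1 by auto

lemma Dq_NN: "2 * zr * (cmod (b N N))^2 \<le> Dq b"
  using Dq_term[of N N b] N2 zf_N by auto

lemma Dq_11_NN: "2 * zl * (cmod (b 1 1))^2 + 2 * zr * (cmod (b N N))^2 \<le> Dq b"
proof -
  let ?f = "\<lambda>i j. (zf N zl zr i + zf N zl zr j + (if i = j then 0 else \<beta>)) * (cmod (b i j))^2"
  have fn: "\<And>i j. 0 \<le> ?f i j" by (intro mult_nonneg_nonneg coef_nonneg) auto
  have 1: "?f 1 1 \<le> (\<Sum>j\<in>{1..N}. ?f 1 j)" using N2 by (intro member_le_sum fn) auto
  have 2: "?f N N \<le> (\<Sum>j\<in>{1..N}. ?f N j)" using N2 by (intro member_le_sum fn) auto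
  have "(\<Sum>i\<in>{1, N}. \<Sum>j\<in>{1..N}. ?f i j) \<le> (\<Sum>i\<in>{1..N}. \<Sum>j\<in>{1..N}. ?f i j)"
    using N2 by (intro sum_mono2 sum_nonneg fn) auto
  moreover have "(\<Sum>i\<in>{1, N}. \<Sum>j\<in>{1..N}. ?f i j) = (\<Sum>j\<in>{1..N}. ?f 1 j) + (\<Sum>j\<in>{1..N}. ?f N j)"
    using N2 by simp
  ultimately show ?thesis using 1 2 zf_1 zf_N unfolding Dq_def by simp
qed

lemma Hc_mmul:
  assumes "i \<in> {1..N}" "j \<in> {1..N}"
  shows "Hc v N b i j = mmul N (hamil v N) b i j - mmul N b (hamil v N) i j"
  unfolding Hc_def mmul_h_left[OF assms(1)] mmul_h_right[OF assms(2)] ..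

lemma T1_real: "Im (\<Sum>i\<in>{1..N}. \<Sum>j\<in>{1..N}. cnj (b i j) * mmul N (hamil v N) b i j) = 0"
proof -
  let ?h = "hamil v N"
  define T where "T = (\<Sum>i\<in>{1..N}. \<Sum>j\<in>{1..N}. cnj (b i j) * mmul N ?h b i j)"
  have T: "T = (\<Sum>i\<in>{1..N}. \<Sum>j\<in>{1..N}. \<Sum>k\<in>{1..N}. cnj (b i j) * ?h i k * b k j)"
    unfolding T_def mmul_def by (simp add: sum_distrib_left mult.assoc)
  have "cnj T = (\<Sum>i\<in>{1..N}. \<Sum>j\<in>{1..N}. \<Sum>k\<in>{1..N}. b i j * ?h i k * cnj (b k j))"
    unfolding T by (simp add: hamil_cnj)
  also have "\<dots> = (\<Sum>j\<in>{1..N}. \<Sum>i\<in>{1..N}. \<Sum>k\<in>{1..N}. b i j * ?h i k * cnj (b k j))"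
    by (rule sum.swap)
  also have "\<dots> = (\<Sum>j\<in>{1..N}. \<Sum>k\<in>{1..N}. \<Sum>i\<in>{1..N}. b i j * ?h i k * cnj (b k j))"
    by (intro sum.cong refl sum.swap)
  also have "\<dots> = (\<Sum>j\<in>{1..N}. \<Sum>k\<in>{1..N}. \<Sum>i\<in>{1..N}. cnj (b k j) * ?h k i * b i j)"
    by (intro sum.cong refl) (simp add: hamil_sym mult_ac)
  also have "\<dots> = (\<Sum>k\<in>{1..N}. \<Sum>j\<in>{1..N}. \<Sum>i\<in>{1..N}. cnj (b k j) * ?h k i * b i j)"
    by (rule sum.swap)
  also have "\<dots> = T" unfolding T ..
  finally have "cnj T = T" .
  then have "Im (cnj T) = Im T" by simp
  then show ?thesis unfolding T_def[symmetric] by simp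
qed

lemma T2_real: "Im (\<Sum>i\<in>{1..N}. \<Sum>j\<in>{1..N}. cnj (b i j) * mmul N b (hamil v N) i j) = 0"
proof -
  let ?h = "hamil v N"
  define T where "T = (\<Sum>i\<in>{1..N}. \<Sum>j\<in>{1..N}. cnj (b i j) * mmul N b ?h i j)"
  have T: "T = (\<Sum>i\<in>{1..N}. \<Sum>j\<in>{1..N}. \<Sum>k\<in>{1..N}. cnj (b i j) * b i k * ?h k j)"
    unfolding T_def mmul_def by (simp add: sum_distrib_left mult.assoc)
  have "cnj T = (\<Sum>i\<in>{1..N}. \<Sum>j\<in>{1..N}. \<Sum>k\<in>{1..N}. b i j * cnj (b i k) * ?h k j)"
    unfolding T by (simp add: hamil_cnj)
  also have "\<dots> = (\<Sum>i\<in>{1..N}. \<Sum>k\<in>{1..N}. \<Sum>j\<in>{1..N}. b i j * cnj (b i k) * ?h k j)"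
    by (intro sum.cong refl sum.swap)
  also have "\<dots> = (\<Sum>i\<in>{1..N}. \<Sum>k\<in>{1..N}. \<Sum>j\<in>{1..N}. cnj (b i k) * b i j * ?h j k)"
    by (intro sum.cong refl) (simp add: hamil_sym mult_ac)
  also have "\<dots> = T" unfolding T ..
  finally have "cnj T = T" .
  then have "Im (cnj T) = Im T" by simp
  then show ?thesis unfolding T_def[symmetric] by simp
qed

lemma Hc_real: "Im (\<Sum>i\<in>{1..N}. \<Sum>j\<in>{1..N}. cnj (b i j) * Hc v N b i j) = 0"
proof -
  have "(\<Sum>i\<in>{1..N}. \<Sum>j\<in>{1..N}. cnj (b i j) * Hc v N b i j)
    = (\<Sum>i\<in>{1..N}. \<Sum>j\<in>{1..N}. cnj (b i j) * mmul N (hamil v N) b i j)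
      - (\<Sum>i\<in>{1..N}. \<Sum>j\<in>{1..N}. cnj (b i j) * mmul N b (hamil v N) i j)"
    by (simp add: Hc_mmul right_diff_distrib sum_subtractf)
  then show ?thesis using T1_real[of b] T2_real[of b] by simp
qed

lemma energy: "Re (ip b (L b)) = - Dq b"
proof -
  have e: "cnj (b i j) * L b i j = - \<i> * (cnj (b i j) * Hc v N b i j)
      - of_real ((zf N zl zr i + zf N zl zr j + (if i = j then 0 else \<beta>)) * (cmod (b i j))^2)"
    if "i \<in> {1..N}" "j \<in> {1..N}" for i j
    unfolding L_in[OF that] complex_norm_square of_real_mult
    by (cases "i = j") (simp_all add: algebra_simps)
  have "ip b (L b) = (\<Sum>i\<in>{1..N}. \<Sum>j\<in>{1..N}. - \<i> * (cnj (b i j) * Hc v N b i j)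
      - of_real ((zf N zl zr i + zf N zl zr j + (if i = j then 0 else \<beta>)) * (cmod (b i j))^2))"
    unfolding ip_def by (intro sum.cong refl e) auto
  also have "\<dots> = - \<i> * (\<Sum>i\<in>{1..N}. \<Sum>j\<in>{1..N}. cnj (b i j) * Hc v N b i j) - of_real (Dq b)"
    unfolding Dq_def by (simp add: sum_subtractf sum_distrib_left)
  finally have "Re (ip b (L b)) = Im (\<Sum>i\<in>{1..N}. \<Sum>j\<in>{1..N}. cnj (b i j) * Hc v N b i j) - Dq b"
    by simp
  then show ?thesis using Hc_real[of b] by simp
qed

end


lemma norm6: "cmod (a + b + c + d + e + f) \<le> cmod a + cmod b + cmod c + cmod d + cmod e + cmod f"
proof -
  have "cmod (a + b + c + d + e + f) \<le> cmod (a + b + c + d + e) + cmod f" by (rule norm_triangle_ineq)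
  moreover have "cmod (a + b + c + d + e) \<le> cmod (a + b + c + d) + cmod e" by (rule norm_triangle_ineq)
  moreover have "cmod (a + b + c + d) \<le> cmod (a + b + c) + cmod d" by (rule norm_triangle_ineq)
  moreover have "cmod (a + b + c) \<le> cmod (a + b) + cmod c" by (rule norm_triangle_ineq)
  moreover have "cmod (a + b) \<le> cmod a + cmod b" by (rule norm_triangle_ineq)
  ultimately show ?thesis by linarith
qed

lemma sum_sum_bound:
  fixes f :: "nat \<Rightarrow> nat \<Rightarrow> real"
  assumes "\<And>i j. i \<in> {1..N} \<Longrightarrow> j \<in> {1..N} \<Longrightarrow> f i j \<le> B"
  shows "(\<Sum>i\<in>{1..N}. \<Sum>j\<in>{1..N}. f i j) \<le> real N * real N * B"
proof -
  have "(\<Sum>i\<in>{1..N}. \<Sum>j\<in>{1..N}. f i j) \<le> (\<Sum>i\<in>{1..N}. \<Sum>j\<in>{1..N}. B)"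
    using assms by (intro sum_mono) auto
  then show ?thesis by simp
qed

context sys begin

definition Vm :: real where "Vm = (\<Sum>i\<in>{1..N}. \<bar>v i\<bar>)"

lemma v_le: "i \<in> {1..N} \<Longrightarrow> \<bar>v i\<bar> \<le> Vm"
  unfolding Vm_def by (intro member_le_sum) auto

lemma Vm_nonneg: "0 \<le> Vm" unfolding Vm_def by (intro sum_nonneg) auto

definition Ad :: real where "Ad = 3 + 2 * (zl + zr) + \<beta> + 2 * Vm"

lemma Ad_nonneg: "0 \<le> Ad" unfolding Ad_def using zl zr bpos Vm_nonneg by simp

lemma ind_bound:
  assumes "c \<Longrightarrow> cmod x \<le> s" "0 \<le> s"
  shows "cmod (ind c * x) \<le> s"
  using assms unfolding ind_def by auto

lemma step:
  assumes n: "1 \<le> n" "n < N" and Q: "Dq b + Dq (L b) \<le> Q"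
  shows "cmod (b n n - b (n+1) (n+1)) \<le> Ad * sqrt (Q / \<beta>)"
proof -
  let ?s = "sqrt (Q / \<beta>)"
  have Q1: "Dq b \<le> Q" and Q2: "Dq (L b) \<le> Q" using Q Dq_nonneg[of b] Dq_nonneg[of "L b"] by auto
  have s0: "0 \<le> ?s" using Q1 Dq_nonneg[of b] bpos by simp
  have inn: "n \<in> {1..N}" "n+1 \<in> {1..N}" using n by auto
  define c where "c = zf N zl zr n + zf N zl zr (n+1) + \<beta>"
  have Ln: "L b n (n+1) = - \<i> * Hc v N b n (n+1) - of_real c * b n (n+1)"
    unfolding L_in[OF inn] c_def by (simp add: algebra_simps)
  have Hn: "Hc v N b n (n+1) = \<i> * L b n (n+1) + \<i> * of_real c * b n (n+1)"
    unfolding Ln by (simp add: algebra_simps)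
  have Ha: "Hc v N b n (n+1) = - b (n+1) (n+1) - (ind (1 < n) * b (n-1) (n+1)) + of_real (v n) * b n (n+1)
      + (ind (n+1 < N) * b n (n+2)) + b n n - b n (n+1) * of_real (v (n+1))"
    unfolding Hc_alt using n by (simp add: ind_def)
  have diff: "b n n - b (n+1) (n+1) = \<i> * L b n (n+1) + \<i> * of_real c * b n (n+1) + ind (1 < n) * b (n-1) (n+1)
     + (- (of_real (v n) * b n (n+1))) + (- (ind (n+1 < N) * b n (n+2))) + b n (n+1) * of_real (v (n+1))"
    using Ha unfolding Hn by (simp add: algebra_simps)
  have b1: "cmod (\<i> * L b n (n+1)) \<le> ?s"
    using Dq_off'[of n "n+1" "L b" Q] inn Q2 by (simp add: norm_mult)
  have bn: "cmod (b n (n+1)) \<le> ?s" using Dq_off'[of n "n+1" b Q] inn Q1 by simp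
  have c0: "0 \<le> c" unfolding c_def using zf_nonneg[of n] zf_nonneg[of "n+1"] bpos by simp
  have cle: "c \<le> 2 * (zl + zr) + \<beta>" unfolding c_def using zf_le[of n] zf_le[of "n+1"] by simp
  have b2: "cmod (\<i> * of_real c * b n (n+1)) \<le> (2 * (zl + zr) + \<beta>) * ?s"
    using c0 cle bn s0 by (simp add: norm_mult) (intro mult_mono, auto)
  have b3: "cmod (ind (1 < n) * b (n-1) (n+1)) \<le> ?s"
  proof (rule ind_bound[OF _ s0])
    assume "1 < n"
    then have "n - 1 \<in> {1..N}" "n - 1 \<noteq> n + 1" using n by auto
    then show "cmod (b (n-1) (n+1)) \<le> ?s" using Dq_off' inn(2) Q1 by blast
  qed
  have b4: "cmod (- (of_real (v n) * b n (n+1))) \<le> Vm * ?s"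
    using v_le[OF inn(1)] bn s0 by (simp add: norm_mult) (intro mult_mono, auto)
  have b5: "cmod (- (ind (n+1 < N) * b n (n+2))) \<le> ?s"
    unfolding norm_minus_cancel
  proof (rule ind_bound[OF _ s0])
    assume "n + 1 < N"
    then have "n + 2 \<in> {1..N}" "n \<noteq> n + 2" using n by auto
    then show "cmod (b n (n+2)) \<le> ?s" using Dq_off' inn(1) Q1 by blast
  qed
  have b6: "cmod (b n (n+1) * of_real (v (n+1))) \<le> Vm * ?s"
    using v_le[OF inn(2)] bn s0 by (simp add: norm_mult mult.commute) (intro mult_mono, auto)
  have "cmod (b n n - b (n+1) (n+1)) \<le> ?s + (2 * (zl + zr) + \<beta>) * ?s + ?s + Vm * ?s + ?s + Vm * ?s"
    unfolding diff by (rule order_trans[OF norm6]) (intro add_mono b1 b2 b3 b4 b5 b6)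
  also have "\<dots> = Ad * ?s" unfolding Ad_def by (simp add: algebra_simps)
  finally show ?thesis .
qed

lemma diag_bound:
  assumes Q: "Dq b + Dq (L b) \<le> Q"
  shows "n \<in> {1..N} \<Longrightarrow> cmod (b n n) \<le> sqrt (Q / (2 * zl)) + real (n - 1) * Ad * sqrt (Q / \<beta>)"
proof (induction n)
  case 0 then show ?case by simp
next
  case (Suc n)
  show ?case
  proof (cases "n = 0")
    case True
    have "2 * zl * (cmod (b 1 1))^2 \<le> Q" using Dq_11[of b] Q Dq_nonneg[of "L b"] by linarith
    then have "(cmod (b 1 1))^2 \<le> Q / (2 * zl)" using zl by (simp add: field_simps)
    then have "cmod (b 1 1) \<le> sqrt (Q / (2 * zl))" by (simp add: real_le_rsqrt)
    then show ?thesis using True by simp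
  next
    case False
    then have n: "1 \<le> n" "n < N" "n \<in> {1..N}" using Suc.prems by auto
    have "cmod (b (n+1) (n+1)) \<le> cmod (b n n) + cmod (b n n - b (n+1) (n+1))"
      using norm_triangle_sub[of "b (n+1) (n+1)" "b n n"] by (simp add: norm_minus_commute)
    also have "\<dots> \<le> (sqrt (Q / (2 * zl)) + real (n - 1) * Ad * sqrt (Q / \<beta>)) + Ad * sqrt (Q / \<beta>)"
      using Suc.IH[OF n(3)] step[OF n(1,2) Q] by linarith
    also have "\<dots> = sqrt (Q / (2 * zl)) + (real (n - 1) + 1) * Ad * sqrt (Q / \<beta>)"
      by (simp only: distrib_right mult_1_left add.assoc)
    also have "real (n - 1) + 1 = real (Suc n - 1)" using n(1) by simp
    finally show ?thesis by simp
  qed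
qed

definition Bc :: real where "Bc = 1 / sqrt (2 * zl) + (real N * Ad + 1) / sqrt \<beta>"

definition Kh :: real where "Kh = real N * real N * Bc^2"

lemma hypo: "nrm2 b \<le> Kh * (Dq b + Dq (L b))"
proof -
  define Q where "Q = Dq b + Dq (L b)"
  have Q0: "0 \<le> Q" unfolding Q_def using Dq_nonneg[of b] Dq_nonneg[of "L b"] by simp
  let ?s = "sqrt (Q / \<beta>)"
  have s0: "0 \<le> ?s" using Q0 bpos by simp
  have Q1: "Dq b \<le> Q" using Dq_nonneg[of "L b"] unfolding Q_def by simp
  define B where "B = sqrt (Q / (2 * zl)) + real N * Ad * ?s + ?s"
  have ent: "cmod (b i j) \<le> B" if "i \<in> {1..N}" "j \<in> {1..N}" for i j
  proof (cases "i = j")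
    case True
    have "cmod (b i i) \<le> sqrt (Q / (2 * zl)) + real (i - 1) * Ad * ?s"
      using diag_bound[of b Q i] that Q_def by simp
    also have "\<dots> \<le> sqrt (Q / (2 * zl)) + real N * Ad * ?s"
      using that Ad_nonneg s0 by (intro add_left_mono mult_right_mono) auto
    finally have "cmod (b i i) \<le> sqrt (Q / (2 * zl)) + real N * Ad * ?s" .
    moreover have "cmod (b i j) = cmod (b i i)" using True by simp
    ultimately show ?thesis using s0 unfolding B_def by linarith
  next
    case False
    have "cmod (b i j) \<le> ?s" using Dq_off'[OF that False Q1] .
    moreover have "0 \<le> sqrt (Q / (2 * zl)) + real N * Ad * ?s"
      using Q0 zl Ad_nonneg s0 by simp
    ultimately show ?thesis unfolding B_def by simp
  qed
  have "nrm2 b \<le> real N * real N * B^2"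
    unfolding nrm2_def by (intro sum_sum_bound power_mono ent) auto
  also have "B = sqrt Q * Bc"
    unfolding B_def Bc_def using zl bpos by (simp add: real_sqrt_divide field_simps)
  also have "real N * real N * (sqrt Q * Bc)^2 = Kh * Q"
    unfolding Kh_def using Q0 by (simp add: power_mult_distrib)
  finally show ?thesis unfolding Q_def .
qed

lemma Kh_pos: "0 < Kh"
proof -
  have "0 < Bc" unfolding Bc_def using zl bpos Ad_nonneg by (intro add_pos_nonneg) auto
  then show ?thesis unfolding Kh_def using N2 by simp
qed

lemma entry_le_nrm2:
  assumes "i \<in> {1..N}" "j \<in> {1..N}"
  shows "(cmod (b i j))^2 \<le> nrm2 b"
proof -
  have "(cmod (b i j))^2 \<le> (\<Sum>j\<in>{1..N}. (cmod (b i j))^2)"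
    using assms by (intro member_le_sum) auto
  also have "\<dots> \<le> nrm2 b" unfolding nrm2_def
    using assms by (intro member_le_sum sum_nonneg) auto
  finally show ?thesis .
qed

lemma nrm2_nonneg: "0 \<le> nrm2 b" unfolding nrm2_def by (intro sum_nonneg) auto

lemma nrm1_nrm2: "nrm1 b \<le> real N * real N * sqrt (nrm2 b)"
  unfolding nrm1_def
  by (intro sum_sum_bound) (metis entry_le_nrm2 real_le_rsqrt)

definition Ck :: real where "Ck = real N * real N * (KM * real N * real N)^2"

lemma Ck_nonneg: "0 \<le> Ck" unfolding Ck_def by simp

lemma nrm2_L: assumes "supp b" shows "nrm2 (L b) \<le> Ck * nrm2 b"
proof -
  have e: "cmod (L b i j) \<le> KM * real N * real N * sqrt (nrm2 b)" if "i \<in> {1..N}" "j \<in> {1..N}" for i j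
  proof -
    have "cmod (L b i j) \<le> KMij i j * nrm1 b" by (rule L_entry_bound[OF assms])
    also have "\<dots> \<le> KM * (real N * real N * sqrt (nrm2 b))"
      using KMij_le[OF that] nrm1_nrm2[of b] KMij_nonneg nrm1_nonneg KM_nonneg
      by (intro mult_mono) auto
    finally show ?thesis by (simp add: mult_ac)
  qed
  have "nrm2 (L b) \<le> real N * real N * (KM * real N * real N * sqrt (nrm2 b))^2"
    unfolding nrm2_def[of "L b"] by (intro sum_sum_bound power_mono e) auto
  also have "\<dots> = Ck * nrm2 b" unfolding Ck_def using nrm2_nonneg[of b] by (simp add: power_mult_distrib)
  finally show ?thesis .
qed

end


lemma cmod2_deriv:
  assumes "(g has_vector_derivative g') (at t)"
  shows "((\<lambda>t. (cmod (g t))^2) has_real_derivative 2 * Re (cnj (g t) * g')) (at t)"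
proof -
  have r: "((\<lambda>t. Re (g t)) has_real_derivative Re g') (at t)"
    unfolding has_real_derivative_iff_has_vector_derivative
    by (rule bounded_linear.has_vector_derivative[OF bounded_linear_Re assms])
  have i: "((\<lambda>t. Im (g t)) has_real_derivative Im g') (at t)"
    unfolding has_real_derivative_iff_has_vector_derivative
    by (rule bounded_linear.has_vector_derivative[OF bounded_linear_Im assms])
  have r2: "((\<lambda>t. (Re (g t))^2) has_real_derivative 2 * Re (g t) * Re g') (at t)"
    using DERIV_power[OF r, of 2] by (simp add: algebra_simps)
  have i2: "((\<lambda>t. (Im (g t))^2) has_real_derivative 2 * Im (g t) * Im g') (at t)"
    using DERIV_power[OF i, of 2] by (simp add: algebra_simps)
  have "((\<lambda>t. (Re (g t))^2 + (Im (g t))^2) has_real_derivative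
      (2 * Re (g t) * Re g' + 2 * Im (g t) * Im g')) (at t)"
    by (intro DERIV_add r2 i2)
  then show ?thesis unfolding cmod_power2 by (simp add: algebra_simps)
qed

context sys begin

lemma sg_L_fun: "supp a \<Longrightarrow> semigrp L s (L a) = L (semigrp L s a)"
  by (intro ext sg_L)

lemma nrm2_deriv:
  assumes a: "supp a"
  shows "((\<lambda>t. nrm2 (semigrp L t a)) has_real_derivative (- 2 * Dq (semigrp L t a))) (at t)"
proof -
  have "((\<lambda>t. nrm2 (semigrp L t a)) has_real_derivative
      (\<Sum>i\<in>{1..N}. \<Sum>j\<in>{1..N}. 2 * Re (cnj (semigrp L t a i j) * semigrp L t (L a) i j))) (at t)"
    unfolding nrm2_def
    by (intro DERIV_sum cmod2_deriv sg_deriv[OF a])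
  also have "(\<Sum>i\<in>{1..N}. \<Sum>j\<in>{1..N}. 2 * Re (cnj (semigrp L t a i j) * semigrp L t (L a) i j))
      = 2 * Re (ip (semigrp L t a) (L (semigrp L t a)))"
    unfolding ip_def sg_L_fun[OF a] by (simp add: sum_distrib_left)
  also have "\<dots> = - 2 * Dq (semigrp L t a)" unfolding energy by simp
  finally show ?thesis .
qed

definition cW :: real where "cW = 2 / ((1 + Ck) * Kh)"

lemma cW_pos: "0 < cW" unfolding cW_def using Ck_nonneg Kh_pos by simp

lemma W_decay:
  assumes a: "supp a" and t: "0 \<le> t"
  shows "nrm2 (semigrp L t a) + nrm2 (semigrp L t (L a))
      \<le> (nrm2 (semigrp L 0 a) + nrm2 (semigrp L 0 (L a))) * exp (- cW * t)"
proof -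
  define W where "W t = nrm2 (semigrp L t a) + nrm2 (semigrp L t (L a))" for t
  define D where "D t = Dq (semigrp L t a) + Dq (semigrp L t (L a))" for t
  have La: "supp (L a)" by (rule supp_L)
  have dW: "(W has_real_derivative - 2 * D t) (at t)" for t
    unfolding W_def D_def using DERIV_add[OF nrm2_deriv[OF a, of t] nrm2_deriv[OF La, of t]]
    by (simp add: algebra_simps)
  have Wle: "W t \<le> ((1 + Ck) * Kh) * D t" for t
  proof -
    have sx: "supp (semigrp L t a)" by (rule sg_supp[OF a])
    have "W t = nrm2 (semigrp L t a) + nrm2 (L (semigrp L t a))"
      unfolding W_def sg_L_fun[OF a] ..
    also have "\<dots> \<le> (1 + Ck) * nrm2 (semigrp L t a)"
      using nrm2_L[OF sx] by (simp add: algebra_simps)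
    also have "\<dots> \<le> (1 + Ck) * (Kh * D t)"
      using hypo[of "semigrp L t a"] Ck_nonneg unfolding D_def sg_L_fun[OF a]
      by (intro mult_left_mono) auto
    finally show ?thesis by (simp add: mult_ac)
  qed
  define \<phi> where "\<phi> t = exp (cW * t) * W t" for t
  have d\<phi>: "(\<phi> has_real_derivative exp (cW * t) * (cW * W t - 2 * D t)) (at t)" for t
  proof -
    have "((\<lambda>t. exp (cW * t)) has_real_derivative exp (cW * t) * (cW * 1)) (at t)"
      by (intro DERIV_fun_exp DERIV_cmult DERIV_ident)
    from DERIV_mult[OF this dW[of t]] show ?thesis unfolding \<phi>_def
      by (simp add: algebra_simps)
  qed
  have nonpos: "exp (cW * t) * (cW * W t - 2 * D t) \<le> 0" for t
  proof -
    have "cW * W t \<le> cW * (((1 + Ck) * Kh) * D t)" using Wle[of t] cW_pos by (intro mult_left_mono) auto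
    also have "\<dots> = 2 * D t" unfolding cW_def using Ck_nonneg Kh_pos by simp
    finally show ?thesis by (simp add: mult_nonneg_nonpos)
  qed
  have "\<phi> t \<le> \<phi> 0"
    by (rule DERIV_nonpos_imp_nonincreasing[OF t]) (use d\<phi> nonpos in blast)
  then have "exp (cW * t) * W t \<le> W 0" unfolding \<phi>_def by simp
  then have "W t \<le> W 0 * exp (- cW * t)"
    by (simp add: exp_minus field_simps)
  then show ?thesis unfolding W_def .
qed

definition W0 :: "cmat \<Rightarrow> real" where
  "W0 a = nrm2 (semigrp L 0 a) + nrm2 (semigrp L 0 (L a))"

lemma W0_nonneg: "0 \<le> W0 a"
  unfolding W0_def using nrm2_nonneg[of "semigrp L 0 a"] nrm2_nonneg[of "semigrp L 0 (L a)"] by simp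

lemma entry_decay:
  assumes a: "supp a" and t: "0 \<le> t"
  shows "cmod (semigrp L t a i j) \<le> sqrt (W0 a) * exp (- (cW / 2) * t)"
proof (cases "i \<in> {1..N} \<and> j \<in> {1..N}")
  case True
  have "(cmod (semigrp L t a i j))^2 \<le> nrm2 (semigrp L t a)"
    using True by (intro entry_le_nrm2) auto
  also have "\<dots> \<le> W0 a * exp (- cW * t)"
    using W_decay[OF a t] nrm2_nonneg[of "semigrp L t (L a)"] unfolding W0_def by linarith
  also have "\<dots> = (sqrt (W0 a) * exp (- (cW / 2) * t))^2"
  proof -
    have W: "0 \<le> W0 a" unfolding W0_def using nrm2_nonneg[of "semigrp L 0 a"] nrm2_nonneg[of "semigrp L 0 (L a)"] by simp
    have "exp (- (cW / 2) * t) ^ 2 = exp (of_nat 2 * (- (cW / 2) * t))" by (rule exp_of_nat_mult[symmetric])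
    also have "\<dots> = exp (- cW * t)" by simp
    finally show ?thesis using W by (simp add: power_mult_distrib)
  qed
  finally show ?thesis
    by (rule power2_le_imp_le) (use nrm2_nonneg in \<open>simp add: W0_def\<close>)
next
  case False
  then have "semigrp L t a i j = 0" using sg_supp[OF a] unfolding supp_def by auto
  then show ?thesis using W0_nonneg[of a] by simp
qed

end


context sys begin

lemma sg_zero: "semigrp L 0 a = a"
proof (intro ext)
  fix i j
  have "semigrp L 0 a i j = (\<Sum>k. cser a i j k * 0 ^ k)" unfolding sg_eq by simp
  also have "\<dots> = cser a i j 0" by (rule powser_zero)
  also have "\<dots> = a i j" by (simp add: cser_def)
  finally show "semigrp L 0 a i j = a i j" .
qed

lemma exp_seq_zero: "0 < c \<Longrightarrow> (\<lambda>k::nat. M * exp (- c * real k)) \<longlonglongrightarrow> 0"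
proof -
  assume c: "0 < c"
  have e: "exp (- c * real k) = exp (- c) ^ k" for k
    by (metis exp_of_nat_mult mult.commute)
  have "(\<lambda>k. exp (- c) ^ k) \<longlonglongrightarrow> 0"
    using c by (intro LIMSEQ_power_zero) auto
  then show ?thesis unfolding e by (intro tendsto_mult_right_zero)
qed

lemma sg_tendsto_zero:
  assumes a: "supp a"
  shows "(\<lambda>k::nat. semigrp L (real k) a i j) \<longlonglongrightarrow> 0"
proof (rule Lim_null_comparison)
  show "\<forall>\<^sub>F k in sequentially. norm (semigrp L (real k) a i j) \<le> sqrt (W0 a) * exp (- (cW / 2) * real k)"
    using entry_decay[OF a] by simp
  show "(\<lambda>k. sqrt (W0 a) * exp (- (cW / 2) * real k)) \<longlonglongrightarrow> 0"
    by (rule exp_seq_zero) (use cW_pos in simp)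
qed

lemma h_integrable: "(\<lambda>t. M * exp (- (cW / 2) * t)) integrable_on {0..}"
proof -
  have "(\<lambda>t. exp (- (cW / 2) * t)) integrable_on {0..}"
    by (rule integrable_on_exp_minus_to_infinity) (use cW_pos in simp)
  then show ?thesis by (rule integrable_on_mult_right)
qed

lemma sg_cont: assumes "supp a" shows "continuous_on S (\<lambda>t. semigrp L t a i j)"
proof -
  have "isCont (\<lambda>t. semigrp L t a i j) x" for x
    using has_vector_derivative_continuous[OF sg_deriv[OF assms, of i j x UNIV]] by simp
  then show ?thesis by (intro continuous_at_imp_continuous_on) auto
qed

lemma pointwise_restrict:
  "(\<lambda>k::nat. if t \<in> {0..real k} then g t else 0) \<longlonglongrightarrow> (g t :: complex)" if "0 \<le> t"
proof (rule tendsto_eventually)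
  obtain m :: nat where "t \<le> real m" using real_arch_simple by blast
  then show "\<forall>\<^sub>F k in sequentially. (if t \<in> {0..real k} then g t else 0) = g t"
    unfolding eventually_sequentially using that
    by (intro exI[of _ m]) (auto intro: order_trans)
qed

lemma deriv_integral:
  assumes a: "supp a"
  shows "((\<lambda>t. semigrp L t (L a) i j) has_integral (- a i j)) {0..}"
proof -
  let ?f = "\<lambda>(k::nat) t. if t \<in> {0..real k} then semigrp L t (L a) i j else 0"
  have fi: "(?f k has_integral (semigrp L (real k) a i j - semigrp L 0 a i j)) {0..}" for k
  proof -
    have "((\<lambda>t. semigrp L t (L a) i j) has_integral (semigrp L (real k) a i j - semigrp L 0 a i j)) {0..real k}"
      by (intro fundamental_theorem_of_calculus sg_deriv[OF a]) auto
    then show ?thesis by (subst has_integral_restrict) auto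
  qed
  show ?thesis
  proof (rule has_integral_dominated_convergence[OF fi])
    show "(\<lambda>t. sqrt (W0 (L a)) * exp (- (cW / 2) * t)) integrable_on {0..}" by (rule h_integrable)
    show "\<forall>t\<in>{0..}. norm (?f k t) \<le> sqrt (W0 (L a)) * exp (- (cW / 2) * t)" for k
      using entry_decay[OF supp_L] W0_nonneg[of "L a"] by auto
    show "\<forall>t\<in>{0..}. (\<lambda>k. ?f k t) \<longlonglongrightarrow> semigrp L t (L a) i j"
      using pointwise_restrict by auto
    have "(\<lambda>k::nat. semigrp L (real k) a i j - semigrp L 0 a i j) \<longlonglongrightarrow> 0 - a i j"
      unfolding sg_zero by (intro tendsto_diff sg_tendsto_zero[OF a] tendsto_const)
    then show "(\<lambda>k::nat. semigrp L (real k) a i j - semigrp L 0 a i j) \<longlonglongrightarrow> - a i j" by simp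
  qed
qed

lemma sg_integrable:
  assumes a: "supp a"
  shows "(\<lambda>t. semigrp L t a i j) integrable_on {0..}"
proof -
  let ?f = "\<lambda>(k::nat) t. if t \<in> {0..real k} then semigrp L t a i j else 0"
  have fi: "?f k integrable_on {0..}" for k
  proof -
    have "(\<lambda>t. semigrp L t a i j) integrable_on {0..real k}"
      by (intro integrable_continuous_real sg_cont[OF a])
    then obtain I where "((\<lambda>t. semigrp L t a i j) has_integral I) {0..real k}" by blast
    then have "(?f k has_integral I) {0..}" by (subst has_integral_restrict) auto
    then show ?thesis by blast
  qed
  show ?thesis
  proof (rule dominated_convergence(1)[OF fi])
    show "(\<lambda>t. sqrt (W0 a) * exp (- (cW / 2) * t)) integrable_on {0..}" by (rule h_integrable)
    show "norm (?f k t) \<le> sqrt (W0 a) * exp (- (cW / 2) * t)" if "t \<in> {0..}" for k t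
      using entry_decay[OF a] that W0_nonneg[of a] by auto
    show "(\<lambda>k. ?f k t) \<longlonglongrightarrow> semigrp L t a i j" if "t \<in> {0..}" for t
      using pointwise_restrict that by auto
  qed
qed

definition Rm :: "cmat \<Rightarrow> cmat" where
  "Rm a = (\<lambda>i j. integral {0..} (\<lambda>t. semigrp L t a i j))"

lemma Rm_supp: "supp a \<Longrightarrow> supp (Rm a)"
  using sg_supp unfolding supp_def Rm_def by simp

lemma Rm_solves:
  assumes a: "supp a"
  shows "L (Rm a) = (\<lambda>i j. - a i j)"
proof (intro ext)
  fix i j
  show "L (Rm a) i j = - a i j"
  proof (cases "i \<in> {1..N} \<and> j \<in> {1..N}")
    case True
    have "L (Rm a) i j = (\<Sum>p\<in>{1..N}. \<Sum>q\<in>{1..N}. K i j p q * integral {0..} (\<lambda>t. semigrp L t a p q))"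
      using Lrep[OF Rm_supp[OF a], of i j] unfolding Rm_def by simp
    also have "\<dots> = (\<Sum>p\<in>{1..N}. \<Sum>q\<in>{1..N}. integral {0..} (\<lambda>t. K i j p q * semigrp L t a p q))"
      using sg_integrable[OF a] by (intro sum.cong refl) (simp add: integral_mult_right)
    also have "\<dots> = (\<Sum>p\<in>{1..N}. integral {0..} (\<lambda>t. \<Sum>q\<in>{1..N}. K i j p q * semigrp L t a p q))"
      by (intro sum.cong refl integral_sum[symmetric] integrable_on_mult_right sg_integrable[OF a]) auto
    also have "\<dots> = integral {0..} (\<lambda>t. \<Sum>p\<in>{1..N}. \<Sum>q\<in>{1..N}. K i j p q * semigrp L t a p q)"
      by (intro integral_sum[symmetric] integrable_sum integrable_on_mult_right sg_integrable[OF a]) auto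
    also have "\<dots> = integral {0..} (\<lambda>t. semigrp L t (L a) i j)"
      unfolding sg_L_fun[OF a] Lrep[OF sg_supp[OF a]] ..
    also have "\<dots> = - a i j" using deriv_integral[OF a] by (rule integral_unique)
    finally show ?thesis .
  next
    case False
    then show ?thesis using a L_out[OF False] unfolding supp_def by auto
  qed
qed

end


definition adj :: "cmat \<Rightarrow> cmat" where "adj b = (\<lambda>i j. cnj (b j i))"


lemma norm4: "cmod (a + b + c + d) \<le> cmod a + cmod b + cmod c + cmod d"
proof -
  have "cmod (a + b + c + d) \<le> cmod (a + b + c) + cmod d" by (rule norm_triangle_ineq)
  moreover have "cmod (a + b + c) \<le> cmod (a + b) + cmod c" by (rule norm_triangle_ineq)
  moreover have "cmod (a + b) \<le> cmod a + cmod b" by (rule norm_triangle_ineq)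
  ultimately show ?thesis by linarith
qed

lemma dd: fixes N a :: nat assumes "a \<in> {1..N}"
  shows "(\<Sum>i\<in>{1..N}. \<Sum>j\<in>{1..N}. if i = a \<and> j = a then f i j else (0::complex)) = f a a"
proof -
  have "(\<Sum>i\<in>{1..N}. \<Sum>j\<in>{1..N}. if i = a \<and> j = a then f i j else (0::complex))
     = (\<Sum>i\<in>{1..N}. if i = a then f i a else 0)"
  proof (intro sum.cong refl)
    fix i assume "i \<in> {1..N}"
    show "(\<Sum>j\<in>{1..N}. if i = a \<and> j = a then f i j else 0) = (if i = a then f i a else 0)"
    proof (cases "i = a")
      case True
      have "(\<Sum>j\<in>{1..N}. if i = a \<and> j = a then f i j else 0) = (\<Sum>j\<in>{1..N}. if j = a then f a j else 0)"
        using True by (intro sum.cong refl) auto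
      also have "\<dots> = f a a" by (subst sum.delta) (use assms in auto)
      finally show ?thesis using True by simp
    qed simp
  qed
  also have "\<dots> = f a a" using assms by (simp add: sum.delta')
  finally show ?thesis .
qed

lemma mm1: "\<bar>x\<bar> \<le> V \<Longrightarrow> cmod z \<le> s \<Longrightarrow> 0 \<le> s \<Longrightarrow> cmod (of_real x * z) \<le> V * s"
proof -
  assume a: "\<bar>x\<bar> \<le> V" "cmod z \<le> s" "0 \<le> s"
  have "cmod (of_real x * z) = \<bar>x\<bar> * cmod z" by (simp add: norm_mult)
  also have "\<dots> \<le> V * s" using a by (intro mult_mono) auto
  finally show ?thesis .
qed

lemma mm2: "\<bar>x\<bar> \<le> V \<Longrightarrow> cmod z \<le> s \<Longrightarrow> 0 \<le> s \<Longrightarrow> cmod (z * of_real x) \<le> V * s"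
  using mm1[of x V z s] by (simp add: mult.commute)

context sys begin

lemma ind_cnj: "cnj (ind c) = ind c" unfolding ind_def by simp

lemma Hc_adj: "Hc v N (adj b) i j = - cnj (Hc v N b j i)"
  unfolding Hc_alt adj_def by (simp add: ind_cnj algebra_simps)

lemma L_adj: "L (adj b) = adj (L b)"
proof (intro ext)
  fix i j
  show "L (adj b) i j = adj (L b) i j"
  proof (cases "i \<in> {1..N} \<and> j \<in> {1..N}")
    case True
    then have i: "i \<in> {1..N}" and j: "j \<in> {1..N}" by auto
    have "L (adj b) i j = - \<i> * Hc v N (adj b) i j
     - of_real (zf N zl zr i + zf N zl zr j) * cnj (b j i) - (if i = j then 0 else of_real \<beta> * cnj (b j i))"
      unfolding L_in[OF i j] by (simp add: adj_def)
    also have "\<dots> = cnj (L b j i)"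
      unfolding L_in[OF j i] Hc_adj by (cases "i = j") (simp_all add: algebra_simps)
    finally show ?thesis unfolding adj_def by simp
  next
    case False
    then have "\<not> (j \<in> {1..N} \<and> i \<in> {1..N})" by auto
    then show ?thesis using L_out[OF False] L_out unfolding adj_def by simp
  qed
qed

lemma Dq_zero: "Dq (\<lambda>i j. 0) = 0" unfolding Dq_def by simp

lemma L_inj:
  assumes d: "supp d" and Ld: "L d = (\<lambda>i j. 0)"
  shows "d i j = 0"
proof -
  have "Re (ip d (L d)) = 0" unfolding Ld ip_def by simp
  then have D1: "Dq d = 0" using energy[of d] by simp
  have "nrm2 d \<le> 0" using hypo[of d] unfolding D1 Ld Dq_zero by simp
  show ?thesis
  proof (cases "i \<in> {1..N} \<and> j \<in> {1..N}")
    case True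
    then have "i \<in> {1..N}" "j \<in> {1..N}" by auto
    then have "(cmod (d i j))^2 \<le> 0" using entry_le_nrm2[of i j d] \<open>nrm2 d \<le> 0\<close> by linarith
    then show ?thesis by simp
  next
    case False
    then show ?thesis using d unfolding supp_def by auto
  qed
qed

end

locale sysR = sys +
  fixes ail air :: real and R :: cmat
  assumes ail: "0 \<le> ail" and air: "0 \<le> air" and Rs: "supp R"
    and Req: "L R = (\<lambda>i j. - ((if i = 1 \<and> j = 1 then of_real (2 * ail) else 0)
                             + (if i = N \<and> j = N then of_real (2 * air) else 0)))"
begin

lemma adj_a0: "adj (\<lambda>i j. - ((if i = 1 \<and> j = 1 then of_real (2 * ail) else 0)
                             + (if i = N \<and> j = N then of_real (2 * air) else 0)))
   = (\<lambda>i j. - ((if i = 1 \<and> j = 1 then of_real (2 * ail) else 0)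
                             + (if i = N \<and> j = N then of_real (2 * air) else 0)))"
  unfolding adj_def by (intro ext) auto

lemma Herm: "R j i = cnj (R i j)"
proof -
  define d where "d = (\<lambda>i j. R i j + (-1) * adj R i j)"
  have sd: "supp d" using Rs unfolding supp_def d_def adj_def by auto
  have "L d = (\<lambda>i j. L R i j + (-1) * L (adj R) i j)"
    unfolding d_def L_add L_scale[of "-1" "adj R"] ..
  also have "\<dots> = (\<lambda>i j. 0)" unfolding L_adj Req adj_a0 by simp
  finally have "d j i = 0" by (intro L_inj sd)
  then show ?thesis unfolding d_def adj_def by simp
qed

lemma R_real: "Im (R n n) = 0"
proof -
  have h: "R n n = cnj (R n n)" by (rule Herm)
  have "Im (R n n) = Im (cnj (R n n))" using arg_cong[OF h, of Im] .
  then show ?thesis by simp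
qed

lemma ip_R: "ip R (L R) = - (of_real (2 * ail) * cnj (R 1 1) + of_real (2 * air) * cnj (R N N))"
proof -
  have e: "cnj (R i j) * L R i j = - ((if i = 1 \<and> j = 1 then of_real (2 * ail) * cnj (R i j) else 0)
     + (if i = N \<and> j = N then of_real (2 * air) * cnj (R i j) else 0))" for i j
    unfolding Req by (auto simp: algebra_simps)
  have 1: "(1::nat) \<in> {1..N}" "N \<in> {1..N}" using N2 by auto
  show ?thesis unfolding ip_def e sum_negf sum.distrib dd[OF 1(1)] dd[OF 1(2)] ..
qed

lemma DqR: "Dq R = 2 * ail * Re (R 1 1) + 2 * air * Re (R N N)"
  using energy[of R] unfolding ip_R by simp

definition zm :: real where "zm = min zl zr"
definition D0 :: real where "D0 = 2 * (ail + air)^2 / zm"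

lemma zm_pos: "0 < zm" unfolding zm_def using zl zr by simp

lemma DqR_bound: "Dq R \<le> D0"
proof -
  let ?a = "cmod (R 1 1)" and ?b = "cmod (R N N)"
  define m where "m = max ?a ?b"
  have m0: "0 \<le> m" unfolding m_def by (meson max.coboundedI1 norm_ge_zero)
  have "Dq R \<le> 2 * ail * ?a + 2 * air * ?b"
  proof -
    have "ail * Re (R 1 1) \<le> ail * ?a" by (intro mult_left_mono complex_Re_le_cmod ail)
    moreover have "air * Re (R N N) \<le> air * ?b" by (intro mult_left_mono complex_Re_le_cmod air)
    ultimately show ?thesis unfolding DqR by linarith
  qed
  also have "\<dots> \<le> 2 * (ail + air) * m"
  proof -
    have am: "?a \<le> m" "?b \<le> m" unfolding m_def by auto
    have "ail * ?a \<le> ail * m" "air * ?b \<le> air * m" using am ail air by (auto intro: mult_left_mono)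
    moreover have "2 * (ail + air) * m = 2 * (ail * m) + 2 * (air * m)" by (simp add: algebra_simps)
    ultimately show ?thesis by linarith
  qed
  finally have D1: "Dq R \<le> 2 * (ail + air) * m" .
  have "zm * m^2 \<le> zl * ?a^2 + zr * ?b^2"
  proof (cases "?a \<le> ?b")
    case True
    then have mb: "m = ?b" unfolding m_def by simp
    have "zm * ?b^2 \<le> zr * ?b^2" by (intro mult_right_mono) (auto simp: zm_def)
    moreover have "0 \<le> zl * ?a^2" using zl by simp
    ultimately show ?thesis unfolding mb by linarith
  next
    case False
    then have ma: "m = ?a" unfolding m_def by simp
    have "zm * ?a^2 \<le> zl * ?a^2" by (intro mult_right_mono) (auto simp: zm_def)
    moreover have "0 \<le> zr * ?b^2" using zr by simp
    ultimately show ?thesis unfolding ma by linarith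
  qed
  also have "\<dots> \<le> Dq R / 2" using Dq_11_NN[of R] by simp
  also have "\<dots> \<le> (ail + air) * m"
  proof -
    have "2 * (ail + air) * m = 2 * ((ail + air) * m)" by simp
    then show ?thesis using D1 by linarith
  qed
  finally have zmm: "zm * m^2 \<le> (ail + air) * m" .
  have mb: "m \<le> (ail + air) / zm"
  proof (cases "m = 0")
    case True then show ?thesis using ail air zm_pos by simp
  next
    case False
    then have "0 < m" using m0 by simp
    then have "zm * m \<le> ail + air" using zmm by (simp add: power2_eq_square)
    then show ?thesis using zm_pos by (simp add: field_simps mult.commute)
  qed
  have "Dq R \<le> 2 * (ail + air) * ((ail + air) / zm)"
    using D1 mb ail air by (smt (verit) mult_left_mono)
  also have "\<dots> = D0" unfolding D0_def by (simp add: power2_eq_square)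
  finally show ?thesis .
qed

abbreviation "s \<equiv> sqrt (D0 / \<beta>)"

lemma s_nonneg: "0 \<le> s" using DqR_bound Dq_nonneg[of R] bpos by simp

lemma R_off: "i \<in> {1..N} \<Longrightarrow> j \<in> {1..N} \<Longrightarrow> i \<noteq> j \<Longrightarrow> cmod (R i j) \<le> s"
  using Dq_off'[OF _ _ _ DqR_bound] by blast

definition g :: "nat \<Rightarrow> real" where "g n = Im (R (Suc n) n)"

lemma diag_re:
  assumes "n \<in> {1..N}"
  shows "Re (L R n n) = Im (Hc v N R n n) - 2 * zf N zl zr n * Re (R n n)"
  unfolding L_in[OF assms assms] by simp

lemma E1: "- 2 * g 1 - 2 * zl * Re (R 1 1) = - 2 * ail"
proof -
  have n: "1 \<in> {1..N}" using N2 by auto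
  have "Hc v N R 1 1 = - R 2 1 + of_real (v 1) * R 1 1 + R 1 2 - R 1 1 * of_real (v 1)"
    unfolding Hc_alt using N2 by (simp add: ind_def numeral_2_eq_2)
  then have "Im (Hc v N R 1 1) = - 2 * g 1"
    unfolding g_def using Herm[of 1 2] by (simp add: numeral_2_eq_2)
  moreover have "Re (L R 1 1) = - 2 * ail" unfolding Req using N2 by simp
  ultimately show ?thesis using diag_re[OF n] zf_1 by simp
qed

lemma EN: "2 * g (N - 1) - 2 * zr * Re (R N N) = - 2 * air"
proof -
  have n: "N \<in> {1..N}" using N2 by auto
  have sN: "Suc (N - 1) = N" using N2 by simp
  have "Hc v N R N N = - R (N-1) N + of_real (v N) * R N N + R N (N-1) - R N N * of_real (v N)"
    unfolding Hc_alt using N2 by (simp add: ind_def)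
  then have "Im (Hc v N R N N) = 2 * g (N - 1)"
    unfolding g_def sN using Herm[of "N-1" N] by simp
  moreover have "Re (L R N N) = - 2 * air" unfolding Req using N2 by simp
  ultimately show ?thesis using diag_re[OF n] zf_N by simp
qed

lemma Emid:
  assumes "1 < n" "n < N"
  shows "g n = g (n - 1)"
proof -
  have n: "n \<in> {1..N}" using assms by auto
  have sn: "Suc (n - 1) = n" using assms by simp
  have "Hc v N R n n = - R (n+1) n - R (n-1) n + of_real (v n) * R n n + R n (n+1) + R n (n-1) - R n n * of_real (v n)"
    unfolding Hc_alt using assms by (simp add: ind_def)
  then have "Im (Hc v N R n n) = - 2 * g n + 2 * g (n - 1)"
    unfolding g_def using Herm[of n "n+1"] Herm[of "n-1" n] sn by simp
  moreover have "Re (L R n n) = 0" unfolding Req using assms by auto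
  moreover have "zf N zl zr n = 0" using assms by (rule zf_mid)
  ultimately show ?thesis using diag_re[OF n] by simp
qed

lemma gconst: "1 \<le> n \<Longrightarrow> n < N \<Longrightarrow> g n = g 1"
proof (induction n)
  case 0 then show ?case by simp
next
  case (Suc n)
  show ?case
  proof (cases "n = 0")
    case True then show ?thesis by simp
  next
    case False
    then have "g (Suc n) = g n" using Emid[of "Suc n"] Suc.prems by simp
    then show ?thesis using Suc False by simp
  qed
qed

definition Ae :: real where "Ae = 2 + 2 * Vm + 2 * (zl + zr)"

lemma offeq:
  assumes n: "1 \<le> n" "n < N"
  shows "\<bar>\<beta> * g n - (Re (R n n) - Re (R (n+1) (n+1)))\<bar> \<le> Ae * s"
proof -
  have inn: "n \<in> {1..N}" "n+1 \<in> {1..N}" using n by auto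
  define c where "c = zf N zl zr (n+1) + zf N zl zr n"
  have c0: "0 \<le> c" "c \<le> 2 * (zl + zr)" unfolding c_def using zf_nonneg zf_le
    by (auto intro: add_nonneg_nonneg) (smt (verit) zf_le)
  define E where "E = - (ind (n+1 < N) * R (n+2) n) + of_real (v (n+1)) * R (n+1) n
     + ind (1 < n) * R (n+1) (n-1) + (- (R (n+1) n * of_real (v n)))"
  have H: "Hc v N R (n+1) n = R (n+1) (n+1) - R n n + E"
    unfolding Hc_alt E_def using n by (simp add: ind_def algebra_simps)
  have "L R (n+1) n = 0" unfolding Req using n by auto
  then have "0 = - \<i> * Hc v N R (n+1) n - of_real c * R (n+1) n - of_real \<beta> * R (n+1) n"
    unfolding L_in[OF inn(2) inn(1)] c_def by simp
  then have "0 = Im (- \<i> * Hc v N R (n+1) n - of_real c * R (n+1) n - of_real \<beta> * R (n+1) n)" by simp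
  then have eq: "\<beta> * g n - (Re (R n n) - Re (R (n+1) (n+1))) = - Re E - c * g n"
    unfolding H g_def by (simp add: algebra_simps)
  have off: "cmod (R (n+1) n) \<le> s" using R_off[OF inn(2) inn(1)] by simp
  have sE: "cmod E \<le> s + Vm * s + s + Vm * s"
    unfolding E_def
  proof (rule order_trans[OF norm4], intro add_mono)
    show "cmod (- (ind (n + 1 < N) * R (n + 2) n)) \<le> s"
      unfolding norm_minus_cancel
    proof (rule ind_bound[OF _ s_nonneg])
      assume "n + 1 < N" then have "n + 2 \<in> {1..N}" "n + 2 \<noteq> n" by auto
      then show "cmod (R (n+2) n) \<le> s" using R_off inn(1) by blast
    qed
    show "cmod (of_real (v (n + 1)) * R (n + 1) n) \<le> Vm * s"
      using v_le[OF inn(2)] off s_nonneg by (rule mm1)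
    show "cmod (ind (1 < n) * R (n + 1) (n - 1)) \<le> s"
    proof (rule ind_bound[OF _ s_nonneg])
      assume "1 < n" then have "n - 1 \<in> {1..N}" "n + 1 \<noteq> n - 1" using n by auto
      then show "cmod (R (n+1) (n-1)) \<le> s" using R_off inn(2) by blast
    qed
    show "cmod (- (R (n + 1) n * of_real (v n))) \<le> Vm * s"
      unfolding norm_minus_cancel using v_le[OF inn(1)] off s_nonneg by (rule mm2)
  qed
  have gb: "\<bar>g n\<bar> \<le> s" unfolding g_def using off abs_Im_le_cmod[of "R (n+1) n"] by simp
  have "\<bar>- Re E - c * g n\<bar> \<le> cmod E + c * \<bar>g n\<bar>"
  proof -
    have "\<bar>c * g n\<bar> = c * \<bar>g n\<bar>" using c0 by (simp add: abs_mult)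
    then show ?thesis using abs_Re_le_cmod[of E] abs_triangle_ineq4[of "- Re E" "c * g n"] by simp
  qed
  also have "\<dots> \<le> (s + Vm * s + s + Vm * s) + 2 * (zl + zr) * s"
    using sE gb c0 s_nonneg by (intro add_mono mult_mono) auto
  also have "\<dots> = Ae * s" unfolding Ae_def by (simp add: algebra_simps)
  finally show ?thesis unfolding eq .
qed

lemma Ae_nonneg: "0 \<le> Ae" unfolding Ae_def using Vm_nonneg zl zr by simp

lemma telescope:
  "n \<in> {1..N} \<Longrightarrow> \<bar>\<beta> * g 1 * real (n - 1) - (Re (R 1 1) - Re (R n n))\<bar> \<le> real (n - 1) * Ae * s"
proof (induction n)
  case 0 then show ?case by simp
next
  case (Suc n)
  show ?case
  proof (cases "n = 0")
    case True then show ?thesis by simp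
  next
    case False
    then have n: "1 \<le> n" "n < N" "n \<in> {1..N}" using Suc.prems by auto
    have IH: "\<bar>\<beta> * g 1 * real (n - 1) - (Re (R 1 1) - Re (R n n))\<bar> \<le> real (n - 1) * Ae * s"
      by (rule Suc.IH[OF n(3)])
    have O: "\<bar>\<beta> * g 1 - (Re (R n n) - Re (R (n+1) (n+1)))\<bar> \<le> Ae * s"
      using offeq[OF n(1,2)] gconst[OF n(1,2)] by simp
    have rn: "real (Suc n - 1) = real (n - 1) + 1" using n(1) by simp
    have "\<bar>\<beta> * g 1 * real (Suc n - 1) - (Re (R 1 1) - Re (R (Suc n) (Suc n)))\<bar>
        = \<bar>(\<beta> * g 1 * real (n - 1) - (Re (R 1 1) - Re (R n n))) + (\<beta> * g 1 - (Re (R n n) - Re (R (n+1) (n+1))))\<bar>"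
      unfolding rn by (simp add: algebra_simps)
    also have "\<dots> \<le> real (n - 1) * Ae * s + Ae * s"
      using IH O by linarith
    also have "\<dots> = real (Suc n - 1) * Ae * s" unfolding rn by (simp add: algebra_simps)
    finally show ?thesis .
  qed
qed

lemma final_bound:
  "\<bar>\<beta> * (2 * Im (R 2 1)) - 2 * (ail / zl - air / zr) / (real N - 1)\<bar> \<le> (2 * Ae + 2 * (1 / zl + 1 / zr)) * s"
proof -
  have nN: "N \<in> {1..N}" using N2 by auto
  have T: "\<bar>\<beta> * g 1 * real (N - 1) - (Re (R 1 1) - Re (R N N))\<bar> \<le> real (N - 1) * Ae * s"
    using telescope[OF nN] .
  have gN: "g (N - 1) = g 1" using gconst[of "N - 1"] N2 by simp
  have R11: "Re (R 1 1) = (ail - g 1) / zl" using E1 zl by (simp add: field_simps)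
  have RNN: "Re (R N N) = (air + g 1) / zr" using EN zr unfolding gN by (simp add: field_simps)
  have g21: "Im (R 2 1) = g 1" unfolding g_def by (simp add: numeral_2_eq_2)
  have gb: "\<bar>g 1\<bar> \<le> s" unfolding g_def using R_off[of 2 1] N2 abs_Im_le_cmod[of "R 2 1"]
    by (simp add: numeral_2_eq_2)
  define M where "M = real (N - 1)"
  have M1: "1 \<le> M" unfolding M_def using N2 by simp
  have MN: "real N - 1 = M" unfolding M_def using N2 by (simp add: of_nat_diff)
  define X where "X = \<beta> * g 1 * M - (ail / zl - air / zr)"
  have X: "\<bar>X\<bar> \<le> M * Ae * s + (1 / zl + 1 / zr) * s"
  proof -
    have "X = (\<beta> * g 1 * M - (Re (R 1 1) - Re (R N N))) - g 1 * (1 / zl + 1 / zr)"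
      unfolding X_def R11 RNN using zl zr by (simp add: field_simps)
    also have "\<bar>\<dots>\<bar> \<le> M * Ae * s + \<bar>g 1\<bar> * (1 / zl + 1 / zr)"
    proof -
      have "\<bar>g 1 * (1 / zl + 1 / zr)\<bar> = \<bar>g 1\<bar> * (1 / zl + 1 / zr)" using zl zr by (simp add: abs_mult)
      then show ?thesis
        using T abs_triangle_ineq4[of "\<beta> * g 1 * M - (Re (R 1 1) - Re (R N N))" "g 1 * (1 / zl + 1 / zr)"]
        unfolding M_def by linarith
    qed
    also have "\<dots> \<le> M * Ae * s + (1 / zl + 1 / zr) * s"
    proof -
      have "\<bar>g 1\<bar> * (1 / zl + 1 / zr) \<le> s * (1 / zl + 1 / zr)"
        using gb zl zr by (intro mult_right_mono) auto
      then show ?thesis by (simp add: mult.commute)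
    qed
    finally show ?thesis .
  qed
  have "\<beta> * (2 * Im (R 2 1)) - 2 * (ail / zl - air / zr) / (real N - 1) = 2 * X / M"
    unfolding g21 MN X_def using M1 by (simp add: field_simps)
  also have "\<bar>2 * X / M\<bar> \<le> (2 * Ae + 2 * (1 / zl + 1 / zr)) * s"
  proof -
    define c where "c = 1 / zl + 1 / zr"
    have cs0: "0 \<le> c * s" unfolding c_def using zl zr s_nonneg by simp
    have "1 * (c * s) \<le> M * (c * s)" using M1 cs0 by (rule mult_right_mono)
    moreover have "M * (Ae * s + c * s) = M * Ae * s + M * (c * s)" by (simp add: algebra_simps)
    ultimately have XM: "\<bar>X\<bar> \<le> (Ae * s + c * s) * M" using X unfolding c_def by (simp add: mult.commute)
    have M0: "0 < M" using M1 by simp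
    have h1: "\<bar>X\<bar> / M \<le> Ae * s + c * s" using XM M0 by (simp add: pos_divide_le_eq)
    have h2: "\<bar>2 * X / M\<bar> = 2 * (\<bar>X\<bar> / M)" using M0 by (simp add: abs_mult)
    have h3: "(2 * Ae + 2 * c) * s = 2 * (Ae * s + c * s)" by (simp add: algebra_simps)
    show ?thesis unfolding c_def[symmetric] h2 h3 using h1 by simp
  qed
  finally show ?thesis .
qed

end


lemma key_bound:
  fixes v :: "nat \<Rightarrow> real" and N :: nat and ail aol air aor \<beta> :: real
  assumes N2: "N \<ge> 2"
    and ail: "ail \<ge> 0" and aol: "aol \<ge> 0" and air: "air \<ge> 0" and aor: "aor \<ge> 0"
    and zl: "ail + aol > 0" and zr: "air + aor > 0" and b: "\<beta> > 0"
  shows "\<bar>\<beta> * Jcur v N ail aol air aor \<beta> - 2 * (ail / (ail + aol) - air / (air + aor)) / (real N - 1)\<bar>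
     \<le> (2 * (2 + 2 * (\<Sum>i\<in>{1..N}. \<bar>v i\<bar>) + 2 * ((ail + aol) + (air + aor))) + 2 * (1 / (ail + aol) + 1 / (air + aor)))
        * sqrt (2 * (ail + air)^2 / min (ail + aol) (air + aor) / \<beta>)"
proof -
  interpret S: sys v N "ail + aol" "air + aor" \<beta>
    by unfold_locales (use N2 zl zr b in auto)
  define a0 where "a0 = (\<lambda>x y. of_real (2 * ail) * proj 1 x y + of_real (2 * air) * proj N x y)"
  have a0': "a0 = (\<lambda>i j. (if i = 1 \<and> j = 1 then of_real (2 * ail) else 0)
                             + (if i = N \<and> j = N then of_real (2 * air) else 0))"
    unfolding a0_def proj_def by (intro ext) auto
  have sa: "S.supp a0" unfolding S.supp_def a0' using N2 by auto
  have Req: "S.L (S.Rm a0) = (\<lambda>i j. - ((if i = 1 \<and> j = 1 then of_real (2 * ail) else 0)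
                             + (if i = N \<and> j = N then of_real (2 * air) else 0)))"
    using S.Rm_solves[OF sa] unfolding a0' .
  interpret T: sysR v N "ail + aol" "air + aor" \<beta> ail air "S.Rm a0"
    by unfold_locales (use ail air S.Rm_supp[OF sa] Req in auto)
  have J: "Jcur v N ail aol air aor \<beta> = 2 * Im (S.Rm a0 2 1)"
    unfolding Jcur_def Rinf_def S.Rm_def lgen_eq' a0_def ..
  have "\<bar>\<beta> * (2 * Im (S.Rm a0 2 1)) - 2 * (ail / (ail + aol) - air / (air + aor)) / (real N - 1)\<bar>
     \<le> (2 * T.Ae + 2 * (1 / (ail + aol) + 1 / (air + aor))) * sqrt (T.D0 / \<beta>)"
    by (rule T.final_bound)
  moreover have "T.Ae = 2 + 2 * (\<Sum>i\<in>{1..N}. \<bar>v i\<bar>) + 2 * ((ail + aol) + (air + aor))"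
    unfolding T.Ae_def S.Vm_def ..
  moreover have "T.D0 = 2 * (ail + air)^2 / min (ail + aol) (air + aor)"
    unfolding T.D0_def T.zm_def ..
  ultimately show ?thesis unfolding J by simp
qed

theorem mainTheorem15:
  fixes v :: "nat \<Rightarrow> real" and N :: nat and ail aol air aor :: real
  assumes "bounded (range v)"
    and "N \<ge> 2"
    and "ail \<ge> 0" "aol \<ge> 0" "air \<ge> 0" "aor \<ge> 0"
    and "ail + aol > 0" "air + aor > 0"
  shows "((\<lambda>\<beta>. \<beta> * Jcur v N ail aol air aor \<beta>) \<longlongrightarrow>
           2 * (ail * aor - aol * air) / ((ail + aol) * (air + aor) * (real N - 1))) at_top"
proof -
  define T where "T = 2 * (ail / (ail + aol) - air / (air + aor)) / (real N - 1)"
  define Cf where "Cf = (2 * (2 + 2 * (\<Sum>i\<in>{1..N}. \<bar>v i\<bar>) + 2 * ((ail + aol) + (air + aor))) + 2 * (1 / (ail + aol) + 1 / (air + aor)))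
        * sqrt (2 * (ail + air)^2 / min (ail + aol) (air + aor))"
  have TT: "T = 2 * (ail * aor - aol * air) / ((ail + aol) * (air + aor) * (real N - 1))"
    unfolding T_def using assms(7,8) by (simp add: field_simps)
  have ev: "\<forall>\<^sub>F \<beta> in at_top. norm (\<beta> * Jcur v N ail aol air aor \<beta> - T) \<le> Cf / sqrt \<beta>"
  proof -
    have "\<forall>\<^sub>F \<beta> in at_top. (\<beta>::real) > 0" by (rule eventually_gt_at_top)
    then show ?thesis
    proof (rule eventually_mono)
      fix \<beta> :: real assume b: "\<beta> > 0"
      have "\<bar>\<beta> * Jcur v N ail aol air aor \<beta> - T\<bar>
        \<le> (2 * (2 + 2 * (\<Sum>i\<in>{1..N}. \<bar>v i\<bar>) + 2 * ((ail + aol) + (air + aor))) + 2 * (1 / (ail + aol) + 1 / (air + aor)))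
        * sqrt (2 * (ail + air)^2 / min (ail + aol) (air + aor) / \<beta>)"
        unfolding T_def by (rule key_bound) (use assms b in auto)
      also have "\<dots> = Cf / sqrt \<beta>" unfolding Cf_def real_sqrt_divide by (simp only: times_divide_eq_right)
      finally show "norm (\<beta> * Jcur v N ail aol air aor \<beta> - T) \<le> Cf / sqrt \<beta>" by simp
    qed
  qed
  have "((\<lambda>\<beta>. Cf / sqrt \<beta>) \<longlongrightarrow> 0) at_top"
    by (intro tendsto_divide_0[OF tendsto_const] filterlim_at_top_imp_at_infinity sqrt_at_top)
  then have "((\<lambda>\<beta>. \<beta> * Jcur v N ail aol air aor \<beta> - T) \<longlongrightarrow> 0) at_top"
    by (rule Lim_null_comparison[OF ev])
  then have "((\<lambda>\<beta>. \<beta> * Jcur v N ail aol air aor \<beta>) \<longlongrightarrow> T) at_top"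
    by (rule LIM_zero_cancel)
  then show ?thesis unfolding TT .
qed


end
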